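(* Let $k \ge 1$, $m = 4k+5$, $\theta = 2\pi/m$, and let $P$ be a finite point set in general position. For any two vertices $u, w \in P$, let $M$ be the midpoint of the side of $T_{uw}$ opposite $u$ and let $\alpha$ be the unsigned angle between $uw$ and $uM$. Then the $\theta_m$-graph on $P$ contains a path from $u$ to $w$ of length at most $$\left(\frac{\cos\alpha}{\cos(\theta/2)} + \frac{(\cos\alpha\tan(\theta/2) + \sin\alpha)\cos(\theta/4)}{\cos(\theta/2) - \sin(3\theta/4)}\right)|uw|.$$
   Context: Cones: for $m \ge 2$, $\theta = 2\pi/m$; around each point $u$ draw $m$ rays with consecutive angular separation $\theta$, oriented so the vertical upward ray from $u$ bisects a cone $C_0^u$; cones numbered $C_0^u,\dots,C_{m-1}^u$ clockwise, same orientation at every point. General position: no two points on a line parallel to a cone boundary ray, no two on a line perpendicular to a cone bisector, no three collinear. The $\theta_m$-graph on $P$: for each $u\in P$ and each cone $C_i^u$ containing another point of $P$, add an edge from $u$ to the point of $C_i^u$ whose orthogonal projection onto the bisector of $C_i^u$ is closest to $u$; edges weighted by Euclidean length. Canonical triangle: if $w$ lies in cone $C$ of $u$, $T_{uw}$ is the triangle bounded by the two boundary rays of $C$ and the line through $w$ perpendicular to the bisector of $C$. *)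

theory Defs
  imports "HOL-Analysis.Analysis"
begin

type_synonym point = "real \<times> real"

definition cone_angle :: "nat \<Rightarrow> real" where
  "cone_angle m = 2 * pi / real m"

text \<open>Unit direction at clockwise angle phi measured from the upward vertical.\<close>
definition cw_dir :: "real \<Rightarrow> point" where
  "cw_dir phi = (sin phi, cos phi)"

text \<open>Bisector of cone C_i (cone C_0 bisected by the upward ray, numbered clockwise).\<close>
definition bisector :: "nat \<Rightarrow> nat \<Rightarrow> point" where
  "bisector m i = cw_dir (real i * cone_angle m)"

definition bdry_left :: "nat \<Rightarrow> nat \<Rightarrow> point" where
  "bdry_left m i = cw_dir (real i * cone_angle m - cone_angle m / 2)"
definition bdry_right :: "nat \<Rightarrow> nat \<Rightarrow> point" where
  "bdry_right m i = cw_dir (real i * cone_angle m + cone_angle m / 2)"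

definition in_cone :: "nat \<Rightarrow> point \<Rightarrow> nat \<Rightarrow> point \<Rightarrow> bool" where
  "in_cone m u i v \<longleftrightarrow> i < m \<and> v \<noteq> u \<and>
     (v - u) \<bullet> bisector m i \<ge> norm (v - u) * cos (cone_angle m / 2)"

definition cross :: "point \<Rightarrow> point \<Rightarrow> real" where
  "cross a b = fst a * snd b - snd a * fst b"

definition general_position :: "nat \<Rightarrow> point set \<Rightarrow> bool" where
  "general_position m P \<longleftrightarrow>
     (\<forall>u\<in>P. \<forall>v\<in>P. u \<noteq> v \<longrightarrow> (\<forall>j<m.
         cross (v - u) (bdry_left m j) \<noteq> 0 \<and> cross (v - u) (bdry_right m j) \<noteq> 0 \<and>
         (v - u) \<bullet> bisector m j \<noteq> 0)) \<and>
     (\<forall>u\<in>P. \<forall>v\<in>P. \<forall>w\<in>P. u \<noteq> v \<and> u \<noteq> w \<and> v \<noteq> w \<longrightarrow> cross (v - u) (w - u) \<noteq> 0)"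

definition theta_edge :: "nat \<Rightarrow> point set \<Rightarrow> point \<Rightarrow> point \<Rightarrow> bool" where
  "theta_edge m P u v \<longleftrightarrow> u \<in> P \<and> v \<in> P \<and>
     (\<exists>i<m. in_cone m u i v \<and>
        (\<forall>x\<in>P. in_cone m u i x \<longrightarrow> (v - u) \<bullet> bisector m i \<le> (x - u) \<bullet> bisector m i))"

definition theta_adj :: "nat \<Rightarrow> point set \<Rightarrow> point \<Rightarrow> point \<Rightarrow> bool" where
  "theta_adj m P u v \<longleftrightarrow> theta_edge m P u v \<or> theta_edge m P v u"

fun is_walk :: "(point \<Rightarrow> point \<Rightarrow> bool) \<Rightarrow> point list \<Rightarrow> bool" where
  "is_walk E [] = True"
| "is_walk E [x] = True"
| "is_walk E (x # y # ys) = (E x y \<and> is_walk E (y # ys))"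

fun path_length :: "point list \<Rightarrow> real" where
  "path_length [] = 0"
| "path_length [x] = 0"
| "path_length (x # y # ys) = dist x y + path_length (y # ys)"

definition theta_path :: "nat \<Rightarrow> point set \<Rightarrow> point \<Rightarrow> point \<Rightarrow> point list \<Rightarrow> bool" where
  "theta_path m P u w ps \<longleftrightarrow> ps \<noteq> [] \<and> hd ps = u \<and> last ps = w \<and> set ps \<subseteq> P \<and>
     is_walk (theta_adj m P) ps"

text \<open>Canonical triangle T_uw for w in cone C_i of u: vertices u and the two corners where
  the boundary rays of C_i meet the line through w perpendicular to the bisector.\<close>
definition canon_corner_left :: "nat \<Rightarrow> point \<Rightarrow> nat \<Rightarrow> point \<Rightarrow> point" where
  "canon_corner_left m u i w =
     u + (((w - u) \<bullet> bisector m i) / cos (cone_angle m / 2)) *\<^sub>R bdry_left m i"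
definition canon_corner_right :: "nat \<Rightarrow> point \<Rightarrow> nat \<Rightarrow> point \<Rightarrow> point" where
  "canon_corner_right m u i w =
     u + (((w - u) \<bullet> bisector m i) / cos (cone_angle m / 2)) *\<^sub>R bdry_right m i"

definition canon_triangle :: "nat \<Rightarrow> point \<Rightarrow> nat \<Rightarrow> point \<Rightarrow> point set" where
  "canon_triangle m u i w = convex hull {u, canon_corner_left m u i w, canon_corner_right m u i w}"

definition canon_mid :: "nat \<Rightarrow> point \<Rightarrow> nat \<Rightarrow> point \<Rightarrow> point" where
  "canon_mid m u i w = midpoint (canon_corner_left m u i w) (canon_corner_right m u i w)"

definition uangle :: "point \<Rightarrow> point \<Rightarrow> real" where
  "uangle a b = arccos ((a \<bullet> b) / (norm a * norm b))"

end

theory Submission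
  imports Defs
begin

definition cc :: "nat \<Rightarrow> real" where
  "cc m = cos (cone_angle m / 4) / (cos (cone_angle m / 2) - sin (3 * cone_angle m / 4))"
definition KK :: "nat \<Rightarrow> real" where
  "KK m = 1 / cos (cone_angle m / 2) + cc m * tan (cone_angle m / 2)"
definition ncw :: "real \<Rightarrow> point" where "ncw a = (cos a, - sin a)"

lemma cst:
  assumes "m = 4*k+5" "k \<ge> 1"
  shows "0 < cone_angle m" "cone_angle m \<le> 2*pi/9"
    "(real k + 1) * cone_angle m = pi/2 - cone_angle m/4"
    "real m * cone_angle m = 2*pi"
    "cos (cone_angle m/2) > 0" "cos (cone_angle m/4) > 0"
    "cos (cone_angle m/2) - sin (3*cone_angle m/4) > 0"
    "cc m > 0" "tan (cone_angle m/2) \<ge> 0" "KK m > 0"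
    "cc m * (1 - sin (cone_angle m/4)) = KK m * cos (cone_angle m/4)"
proof -
  let ?t = "cone_angle m"
  have m: "real m = 4*real k + 5" using assms by simp
  show tp: "0 < ?t" unfolding cone_angle_def using m by simp
  have k1: "real k \<ge> 1" using assms by simp
  show tl: "?t \<le> 2*pi/9" unfolding cone_angle_def using m k1
    by (simp add: divide_simps)
  show "(real k + 1) * ?t = pi/2 - ?t/4" unfolding cone_angle_def m
    by (simp add: field_simps)
  show "real m * ?t = 2*pi" unfolding cone_angle_def using m by simp
  have pp: "pi/5 < pi/2" by simp
  show c2: "cos (?t/2) > 0" by (rule cos_gt_zero_pi) (use tp tl in auto)
  show c4: "cos (?t/4) > 0" by (rule cos_gt_zero_pi) (use tp tl in auto)
  have "sin (3*?t/4) < sin (pi/2 - ?t/2)"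
    by (subst sin_mono_less_eq) (use tp tl in auto)
  then show d: "cos (?t/2) - sin (3*?t/4) > 0" by (simp add: sin_cos_eq)
  show ccp: "cc m > 0" unfolding cc_def using c4 d by simp
  show tn: "tan (?t/2) \<ge> 0" using tan_gt_zero[of "?t/2"] tp tl by auto
  show "KK m > 0" unfolding KK_def using c2 ccp tn by (simp add: add_pos_nonneg)
  have s3: "sin (3*?t/4) = sin (?t/4) * cos (?t/2) + cos (?t/4) * sin (?t/2)"
    using sin_add[of "?t/4" "?t/2"] by (simp add: algebra_simps)
  have "cc m * (cos (?t/2) - sin (3*?t/4)) = cos (?t/4)" unfolding cc_def using d by simp
  then show "cc m * (1 - sin (?t/4)) = KK m * cos (?t/4)"
    unfolding KK_def tan_def s3 using c2 by (simp add: field_simps)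
qed


lemma hmono:
  assumes m: "m = 4*k+5" "k \<ge> 1" and a: "0 \<le> a" "a \<le> x" "a + x \<le> pi/2 + cone_angle m/4"
  shows "KK m * cos a + cc m * sin a \<le> KK m * cos x + cc m * sin x"
proof -
  let ?t = "cone_angle m"
  note C = cst[OF m]
  define \<mu> where "\<mu> = (x+a)/2"
  define \<nu> where "\<nu> = (x-a)/2"
  have xa: "x = \<mu> + \<nu>" "a = \<mu> - \<nu>" unfolding \<mu>_def \<nu>_def by (simp_all add: field_simps)
  have diff: "(KK m * cos x + cc m * sin x) - (KK m * cos a + cc m * sin a)
      = 2 * sin \<nu> * (cc m * cos \<mu> - KK m * sin \<mu>)"
    unfolding xa cos_add sin_add cos_diff sin_diff by (simp add: algebra_simps)
  have sn: "sin \<nu> \<ge> 0" by (rule sin_ge_zero) (use a C(1,2) in \<open>auto simp: \<nu>_def\<close>)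
  have "cos (?t/4) * (cc m * cos \<mu> - KK m * sin \<mu>)
        = cc m * cos \<mu> * cos (?t/4) - (KK m * cos (?t/4)) * sin \<mu>" by (simp add: algebra_simps)
  also have "\<dots> = cc m * (cos (\<mu> - ?t/4) - sin \<mu>)"
    unfolding C(11)[symmetric] cos_diff by (simp add: algebra_simps)
  finally have e: "cos (?t/4) * (cc m * cos \<mu> - KK m * sin \<mu>) = cc m * (cos (\<mu> - ?t/4) - sin \<mu>)" .
  have mu: "0 \<le> \<mu>" "\<mu> \<le> pi/4 + ?t/8" using a by (auto simp: \<mu>_def)
  have "cos (pi/2 - \<mu>) \<le> cos \<bar>\<mu> - ?t/4\<bar>"
    by (subst cos_mono_le_eq) (use mu C(1,2) in auto)
  then have "sin \<mu> \<le> cos (\<mu> - ?t/4)"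
  proof -
    have "cos (pi/2 - \<mu>) = sin \<mu>" by (simp add: cos_diff)
    moreover have "cos \<bar>\<mu> - ?t/4\<bar> = cos (\<mu> - ?t/4)" by (rule cos_abs_real)
    ultimately show ?thesis using \<open>cos (pi/2 - \<mu>) \<le> cos \<bar>\<mu> - ?t/4\<bar>\<close> by linarith
  qed
  with e C(6,8) have "cc m * cos \<mu> - KK m * sin \<mu> \<ge> 0"
    by (metis diff_ge_0_iff_ge mult_nonneg_nonneg zero_le_mult_iff less_imp_le not_le)
  with sn have "2 * sin \<nu> * (cc m * cos \<mu> - KK m * sin \<mu>) \<ge> 0" by simp
  with diff show ?thesis by linarith
qed


lemma hang0:
  assumes m: "m = 4*k+5" "k \<ge> 1" and n: "n \<ge> (0::int)" and ps: "\<bar>\<psi>\<bar> < pi/2"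
    and ph: "\<phi> = \<psi> - real_of_int n * cone_angle m" "\<bar>\<phi>\<bar> \<le> cone_angle m / 2"
  shows "\<bar>\<phi>\<bar> \<le> \<bar>\<psi>\<bar> \<and> \<bar>\<phi>\<bar> + \<bar>\<psi>\<bar> \<le> pi/2 + cone_angle m/4"
proof (cases "n = 0")
  case True
  with ph have "\<phi> = \<psi>" by simp
  with ph cst(1,2)[OF m] show ?thesis by (auto simp: field_simps)
next
  case False
  let ?t = "cone_angle m"
  note C = cst[OF m]
  have n1: "real_of_int n \<ge> 1" using n False by simp
  have "real_of_int n * ?t \<ge> 1 * ?t" using n1 C(1) by (intro mult_right_mono) auto
  then have psi0: "\<psi> \<ge> ?t/2" using ph by arith
  then have apsi: "\<bar>\<psi>\<bar> = \<psi>" using C(1) by simp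
  have "real_of_int n * ?t < pi/2 + ?t/2" using ph ps by arith
  then have "(real_of_int n - (real k + 1)) * ?t < (3/4) * ?t" using C(3) by (simp add: algebra_simps)
  then have "real_of_int n - (real k + 1) < 3/4" using C(1) by (simp add: mult_less_cancel_right_pos)
  then have nk: "n \<le> int k + 1"
  proof -
    assume a: "real_of_int n - (real k + 1) < 3/4"
    show "n \<le> int k + 1"
    proof (rule ccontr)
      assume "\<not> n \<le> int k + 1"
      then have "n \<ge> int k + 2" by simp
      then have "real_of_int n \<ge> real_of_int (int k + 2)" by (simp only: of_int_le_iff)
      with a show False by simp
    qed
  qed
  have p1: "\<bar>\<phi>\<bar> \<le> \<bar>\<psi>\<bar>" using psi0 apsi ph by linarith
  have "\<bar>\<phi>\<bar> + \<psi> \<le> pi/2 + ?t/4"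
  proof (cases "\<phi> \<le> 0")
    case True
    have "real_of_int n * ?t \<le> (real k + 1) * ?t"
      using nk C(1) by (intro mult_right_mono) (auto simp: of_int_le_iff[symmetric])
    with True ph C(1,3) show ?thesis by simp
  next
    case False
    show ?thesis
    proof (cases "n \<le> int k")
      case True
      have "real_of_int n * ?t \<le> real k * ?t"
        using True C(1) by (intro mult_right_mono) (auto simp: of_int_le_iff[symmetric])
      moreover have "(real k + 1) * ?t = real k * ?t + ?t" by (simp add: algebra_simps)
      ultimately show ?thesis using False ph C(3) by linarith
    next
      case nf: False
      with nk have "n = int k + 1" by simp
      then have "real_of_int n * ?t = pi/2 - ?t/4" using C(3) by simp
      with False ph ps apsi show ?thesis by simp
    qed
  qed
  with p1 apsi show ?thesis by simp
qed

lemma hang: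
  assumes m: "m = 4*k+5" "k \<ge> 1" and ps: "\<bar>\<psi>\<bar> < pi/2"
    and ph: "\<phi> = \<psi> - real_of_int n * cone_angle m" "\<bar>\<phi>\<bar> \<le> cone_angle m / 2"
  shows "KK m * cos \<phi> + cc m * \<bar>sin \<phi>\<bar> \<le> KK m * cos \<psi> + cc m * \<bar>sin \<psi>\<bar>"
proof -
  have A: "\<bar>\<phi>\<bar> \<le> \<bar>\<psi>\<bar> \<and> \<bar>\<phi>\<bar> + \<bar>\<psi>\<bar> \<le> pi/2 + cone_angle m/4"
  proof (cases "n \<ge> 0")
    case True then show ?thesis using hang0[OF m True ps ph] by simp
  next
    case False
    have "\<bar>- \<phi>\<bar> \<le> \<bar>- \<psi>\<bar> \<and> \<bar>- \<phi>\<bar> + \<bar>- \<psi>\<bar> \<le> pi/2 + cone_angle m/4"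
      by (rule hang0[OF m, of "-n"]) (use False ps ph in \<open>auto simp: abs_minus_commute\<close>)
    then show ?thesis by simp
  qed
  note C = cst[OF m]
  have sa: "\<bar>sin z\<bar> = sin \<bar>z\<bar>" if "\<bar>z\<bar> \<le> pi" for z :: real
  proof (cases "z \<ge> 0")
    case True then show ?thesis using sin_ge_zero[of z] that by simp
  next
    case False then show ?thesis using sin_ge_zero[of "-z"] that by simp
  qed
  have "KK m * cos \<bar>\<phi>\<bar> + cc m * sin \<bar>\<phi>\<bar> \<le> KK m * cos \<bar>\<psi>\<bar> + cc m * sin \<bar>\<psi>\<bar>"
    by (rule hmono[OF m]) (use A in auto)
  moreover have "\<bar>\<phi>\<bar> \<le> pi" using A ps by linarith
  ultimately show ?thesis using sa[of \<phi>] sa[of \<psi>] ps by simp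
qed


lemma inner_pt: "((a::real), (b::real)) \<bullet> (c, d) = a*c + b*d"
  by (simp add: inner_Pair)

lemma norm_pt: "norm ((a::real), (b::real)) = sqrt (a\<^sup>2 + b\<^sup>2)"
  by (simp add: norm_Pair)

lemma pol:
  assumes "d = (R * sin \<Psi>, R * cos \<Psi>)"
  shows "d \<bullet> cw_dir a = R * cos (\<Psi> - a)" "d \<bullet> ncw a = R * sin (\<Psi> - a)"
  using assms by (simp_all add: cw_dir_def ncw_def inner_pt cos_diff sin_diff algebra_simps)

lemma cone_exists:
  assumes m: "m = 4*k+5" "k \<ge> 1" and d: "d \<noteq> 0"
  shows "\<exists>j<m. d \<bullet> bisector m j \<ge> norm d * cos (cone_angle m / 2)"
proof -
  note C = cst[OF m]
  let ?t = "cone_angle m"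
  obtain d1 d2 where dd: "d = (d1, d2)" by (cases d)
  define r where "r = norm d"
  have r: "r > 0" using d by (simp add: r_def)
  have rr: "r\<^sup>2 = d1\<^sup>2 + d2\<^sup>2" unfolding r_def dd norm_pt by simp
  have "(d2/r)\<^sup>2 + (d1/r)\<^sup>2 = (d1\<^sup>2 + d2\<^sup>2) / r\<^sup>2" by (simp add: power_divide add_divide_distrib)
  also have "\<dots> = 1" using r rr by (metis less_numeral_extra(3) divide_self_if power_not_zero)
  finally have "(d2/r)\<^sup>2 + (d1/r)\<^sup>2 = 1" .
  then obtain t where t: "0 \<le> t" "t < 2*pi" "d2/r = cos t" "d1/r = sin t"
    by (rule sincos_total_2pi)
  have dp: "d = (r * sin t, r * cos t)" using t r dd by (auto simp: field_simps)
  define n where "n = \<lfloor>t / ?t + 1/2\<rfloor>"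
  have n1: "real_of_int n \<le> t / ?t + 1/2" "t / ?t + 1/2 < real_of_int n + 1"
    unfolding n_def by linarith+
  have "t / ?t \<ge> 0" using t C(1) by simp
  then have n0: "n \<ge> 0" using n1 by linarith
  have "t / ?t < real m" using t C(1,4) by (simp add: divide_simps)
  then have "real_of_int n < real m + 1" using n1 by linarith
  then have nm: "n \<le> int m" by linarith
  have tn: "\<bar>t - real_of_int n * ?t\<bar> \<le> ?t/2"
  proof -
    have "real_of_int n * ?t \<le> (t / ?t + 1/2) * ?t" using n1 C(1) by (intro mult_right_mono) auto
    moreover have "(t / ?t - 1/2) * ?t \<le> real_of_int n * ?t" using n1 C(1) by (intro mult_right_mono) auto
    moreover have "(t / ?t + 1/2) * ?t = t + ?t/2" "(t / ?t - 1/2) * ?t = t - ?t/2"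
      using C(1) by (simp_all add: field_simps)
    ultimately show ?thesis by linarith
  qed
  have cn: "cos (t - real_of_int n * ?t) \<ge> cos (?t/2)"
  proof -
    have "cos \<bar>t - real_of_int n * ?t\<bar> \<ge> cos (?t/2)"
      by (subst cos_mono_le_eq) (use tn C(1,2) in auto)
    then show ?thesis by simp
  qed
  show ?thesis
  proof (cases "n = int m")
    case True
    have "cos (t - real_of_int n * ?t) = cos (t - 0 * ?t)"
      using True C(4) cos_periodic[of "t - 2*pi"] by simp
    then have "d \<bullet> bisector m 0 \<ge> norm d * cos (?t/2)"
      using cn pol(1)[OF dp, of 0] r unfolding bisector_def r_def[symmetric] by simp
    moreover have "0 < m" using m by simp
    ultimately show ?thesis by blast
  next
    case False
    then have "nat n < m" using nm n0 by linarith
    moreover have "real (nat n) = real_of_int n" using n0 by simp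
    ultimately show ?thesis
      using cn pol(1)[OF dp, of "real (nat n) * ?t"] r unfolding bisector_def r_def[symmetric]
      by (intro exI[of _ "nat n"]) simp
  qed
qed


lemma cos_shift: "cos (x - 2*pi*real_of_int l) = cos x" "sin (x - 2*pi*real_of_int l) = sin x"
  by (simp_all add: cos_diff sin_diff)

lemma Hvec:
  assumes m: "m = 4*k+5" "k \<ge> 1" and ij: "i < m" "j < m"
    and Y: "d \<bullet> bisector m i > 0"
    and cj: "d \<bullet> bisector m j \<ge> norm d * cos (cone_angle m / 2)"
  shows "KK m * (d \<bullet> bisector m j) + cc m * \<bar>d \<bullet> ncw (real j * cone_angle m)\<bar>
       \<le> KK m * (d \<bullet> bisector m i) + cc m * \<bar>d \<bullet> ncw (real i * cone_angle m)\<bar>"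
proof -
  note C = cst[OF m]
  let ?t = "cone_angle m"
  define A where "A = real i * ?t"
  define X where "X = d \<bullet> ncw A"
  define Y where "Y = d \<bullet> bisector m i"
  obtain d1 d2 where dd: "d = (d1, d2)" by (cases d)
  have XY: "X = d1 * cos A - d2 * sin A" "Y = d1 * sin A + d2 * cos A"
    unfolding X_def Y_def dd ncw_def bisector_def cw_dir_def A_def by (simp_all add: inner_pt)
  have Yp: "Y > 0" using Y by (simp add: Y_def)
  define \<psi> where "\<psi> = arctan (X / Y)"
  have cpos: "cos \<psi> > 0" unfolding \<psi>_def cos_arctan by (simp add: add_pos_nonneg)
  have psb: "\<bar>\<psi>\<bar> < pi/2" using arctan_bounded[of "X/Y"] unfolding \<psi>_def by auto
  define R where "R = Y / cos \<psi>"
  have Rp: "R > 0" using Yp cpos by (simp add: R_def)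
  have RY: "R * cos \<psi> = Y" using cpos by (simp add: R_def)
  have RX: "R * sin \<psi> = X"
  proof -
    have "R * sin \<psi> = Y * tan \<psi>" using cpos by (simp add: R_def tan_def)
    also have "\<dots> = X" using Yp by (simp add: \<psi>_def tan_arctan)
    finally show ?thesis .
  qed
  have sc: "cos A * cos A + sin A * sin A = 1" by (simp flip: power2_eq_square)
  have e1: "d1 = X * cos A + Y * sin A"
  proof -
    have "X * cos A + Y * sin A = d1 * (cos A * cos A + sin A * sin A)" by (simp only: XY algebra_simps)
    then show ?thesis using sc by simp
  qed
  have e2: "d2 = Y * cos A - X * sin A"
  proof -
    have "Y * cos A - X * sin A = d2 * (cos A * cos A + sin A * sin A)" by (simp only: XY algebra_simps)
    then show ?thesis using sc by simp
  qed
  define \<Psi> where "\<Psi> = \<psi> + A"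
  have dp: "d = (R * sin \<Psi>, R * cos \<Psi>)"
    unfolding dd \<Psi>_def sin_add cos_add using e1 e2 RX[symmetric] RY[symmetric]
    by (simp add: algebra_simps)
  have nd: "norm d = R"
  proof -
    have "norm d = sqrt (R\<^sup>2 * ((sin \<Psi>)\<^sup>2 + (cos \<Psi>)\<^sup>2))" unfolding dp norm_pt by (simp only: power_mult_distrib distrib_left)
    also have "\<dots> = sqrt (R\<^sup>2)" by simp
    finally show ?thesis using Rp by simp
  qed
  define l :: int where "l = (if 2 * (int j - int i) > int m then 1 else if 2 * (int j - int i) < - int m then -1 else 0)"
  define n :: int where "n = (int j - int i) - l * int m"
  have nb: "2 * \<bar>n\<bar> \<le> int m" using ij unfolding n_def l_def by (auto; arith)
  have jin: "(real j - real i) * ?t = real_of_int n * ?t + 2 * pi * real_of_int l"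
  proof -
    have "real j - real i = real_of_int n + real_of_int l * real m" unfolding n_def by simp
    then have "(real j - real i) * ?t = real_of_int n * ?t + real_of_int l * (real m * ?t)" by (simp add: algebra_simps)
    then show ?thesis using C(4) by simp
  qed
  define \<phi> where "\<phi> = \<psi> - real_of_int n * ?t"
  have Pj: "\<Psi> - real j * ?t = \<phi> - 2 * pi * real_of_int l"
    unfolding \<Psi>_def \<phi>_def A_def using jin by (simp add: algebra_simps)
  have bj: "d \<bullet> bisector m j = R * cos \<phi>" and nj: "d \<bullet> ncw (real j * ?t) = R * sin \<phi>"
    using pol[OF dp, of "real j * ?t"] unfolding bisector_def Pj cos_shift by simp_all
  have bi: "d \<bullet> bisector m i = R * cos \<psi>" and ni: "d \<bullet> ncw A = R * sin \<psi>"
    using pol[OF dp, of A] unfolding bisector_def \<Psi>_def A_def by simp_all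
  have "real_of_int (2 * \<bar>n\<bar>) \<le> real m" using nb by (simp only: of_int_le_iff[symmetric])
  then have "2 * \<bar>real_of_int n\<bar> * ?t \<le> real m * ?t" using C(1) by (intro mult_right_mono) auto
  then have ntb: "\<bar>real_of_int n * ?t\<bar> \<le> pi" using C(1,4) by (simp add: abs_mult)
  have cph: "cos \<phi> \<ge> cos (?t/2)" using cj bj nd Rp by simp
  have phb: "\<bar>\<phi>\<bar> \<le> ?t/2"
  proof (cases "\<bar>\<phi>\<bar> \<le> pi")
    case True
    have "cos \<bar>\<phi>\<bar> \<ge> cos (?t/2)" using cph by simp
    then show ?thesis by (subst (asm) cos_mono_le_eq) (use True C(1,2) in auto)
  next
    case False
    have "\<bar>\<phi>\<bar> < 3*pi/2" using psb ntb unfolding \<phi>_def by linarith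
    then have "cos (\<bar>\<phi>\<bar> - pi) > 0" using False by (intro cos_gt_zero_pi) auto
    moreover have "cos (\<bar>\<phi>\<bar> - pi) = - cos \<bar>\<phi>\<bar>" by (simp add: cos_diff)
    ultimately have "cos \<phi> < 0" by simp
    with cph C(5) show ?thesis by linarith
  qed
  have H: "KK m * cos \<phi> + cc m * \<bar>sin \<phi>\<bar> \<le> KK m * cos \<psi> + cc m * \<bar>sin \<psi>\<bar>"
    by (rule hang[OF m psb \<phi>_def phb])
  have "R * (KK m * cos \<phi> + cc m * \<bar>sin \<phi>\<bar>) \<le> R * (KK m * cos \<psi> + cc m * \<bar>sin \<psi>\<bar>)"
    using H Rp by (intro mult_left_mono) auto
  then show ?thesis unfolding bj nj bi ni[unfolded A_def] using Rp
    by (simp add: abs_mult algebra_simps)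
qed


definition Bnd :: "nat \<Rightarrow> point \<Rightarrow> nat \<Rightarrow> point \<Rightarrow> real" where
  "Bnd m u i w = KK m * ((w - u) \<bullet> bisector m i) + cc m * \<bar>(w - u) \<bullet> ncw (real i * cone_angle m)\<bar>"

lemma frame: "(d \<bullet> cw_dir a)\<^sup>2 + (d \<bullet> ncw a)\<^sup>2 = (norm d)\<^sup>2"
proof -
  obtain d1 d2 where dd: "d = (d1, d2)" by (cases d)
  have "(d \<bullet> cw_dir a)\<^sup>2 + (d \<bullet> ncw a)\<^sup>2 = (d1\<^sup>2 + d2\<^sup>2) * ((sin a)\<^sup>2 + (cos a)\<^sup>2)"
    unfolding dd cw_dir_def ncw_def inner_pt by (simp only: power2_eq_square algebra_simps)
  also have "\<dots> = (norm d)\<^sup>2" unfolding dd norm_pt by simp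
  finally show ?thesis .
qed

lemma cone_coords:
  assumes m: "m = 4*k+5" "k \<ge> 1" and c: "d \<bullet> bisector m i \<ge> norm d * cos (cone_angle m / 2)"
  shows "norm d \<le> (d \<bullet> bisector m i) / cos (cone_angle m / 2)"
    "\<bar>d \<bullet> ncw (real i * cone_angle m)\<bar> \<le> tan (cone_angle m / 2) * (d \<bullet> bisector m i)"
    "d \<bullet> bisector m i \<ge> 0"
proof -
  note C = cst[OF m]
  let ?c = "cos (cone_angle m / 2)" and ?s = "sin (cone_angle m / 2)"
  let ?Y = "d \<bullet> bisector m i" and ?X = "d \<bullet> ncw (real i * cone_angle m)"
  have c0: "?c > 0" by (rule C(5))
  have c': "norm d * ?c \<le> ?Y" by (rule c)
  show "norm d \<le> ?Y / ?c" using c' c0 by (subst pos_le_divide_eq) auto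
  have nc0: "norm d * ?c \<ge> 0" using c0 by simp
  then show Y0: "?Y \<ge> 0" using c' by linarith
  have fr: "?Y\<^sup>2 + ?X\<^sup>2 = (norm d)\<^sup>2" using frame[of d "real i * cone_angle m"] by (simp only: bisector_def)
  have "(norm d * ?c)\<^sup>2 \<le> ?Y\<^sup>2" by (rule power_mono[OF c' nc0])
  then have "(norm d)\<^sup>2 * ?c\<^sup>2 \<le> ?Y\<^sup>2" by (simp only: power_mult_distrib)
  then have A: "(?Y\<^sup>2 + ?X\<^sup>2) * ?c\<^sup>2 \<le> ?Y\<^sup>2" by (simp only: fr)
  have B: "(?Y\<^sup>2 + ?X\<^sup>2) * ?c\<^sup>2 = ?Y\<^sup>2 * ?c\<^sup>2 + ?X\<^sup>2 * ?c\<^sup>2" by (simp only: distrib_right)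
  have sc: "?s\<^sup>2 = 1 - ?c\<^sup>2" by (rule sin_squared_eq)
  have D: "?Y\<^sup>2 * ?s\<^sup>2 = ?Y\<^sup>2 - ?Y\<^sup>2 * ?c\<^sup>2" unfolding sc by (simp only: right_diff_distrib mult_1_right)
  have "?X\<^sup>2 * ?c\<^sup>2 \<le> ?Y\<^sup>2 * ?s\<^sup>2" using A B D by linarith
  then have sq: "(\<bar>?X\<bar> * ?c)\<^sup>2 \<le> (?Y * ?s)\<^sup>2" by (simp only: power_mult_distrib power2_abs)
  have s0: "?s \<ge> 0" by (rule sin_ge_zero) (use C(1,2) in auto)
  have "\<bar>?X\<bar> * ?c \<le> ?Y * ?s" by (rule power2_le_imp_le[OF sq]) (use Y0 s0 in simp)
  then have "\<bar>?X\<bar> \<le> ?Y * ?s / ?c" using c0 by (subst pos_le_divide_eq) auto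
  moreover have "?Y * ?s / ?c = tan (cone_angle m / 2) * ?Y" by (simp add: tan_def)
  ultimately show "\<bar>?X\<bar> \<le> tan (cone_angle m / 2) * ?Y" by simp
qed

lemma G:
  assumes m: "m = 4*k+5" "k \<ge> 1" and cw: "in_cone m u i w" and cv: "in_cone m u i v"
    and lt: "(v - u) \<bullet> bisector m i < (w - u) \<bullet> bisector m i" and cvw: "in_cone m v j w"
  shows "norm (v - u) + Bnd m v j w \<le> Bnd m u i w"
proof -
  note C = cst[OF m]
  let ?Yv = "(v - u) \<bullet> bisector m i" and ?Xv = "(v - u) \<bullet> ncw (real i * cone_angle m)"
  let ?Yw = "(w - u) \<bullet> bisector m i" and ?Xw = "(w - u) \<bullet> ncw (real i * cone_angle m)"
  let ?c = "cos (cone_angle m / 2)" and ?tn = "tan (cone_angle m / 2)"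
  have iv: "i < m" "?Yv \<ge> norm (v - u) * ?c" using cv unfolding in_cone_def by auto
  note cc = cone_coords[OF m iv(2)]
  have jv: "j < m" "(w - v) \<bullet> bisector m j \<ge> norm (w - v) * ?c" using cvw unfolding in_cone_def by auto
  have wv: "(w - v) \<bullet> x = (w - u) \<bullet> x - (v - u) \<bullet> x" for x by (simp add: inner_diff_left)
  have "(w - v) \<bullet> bisector m i > 0" unfolding wv using lt by linarith
  from Hvec[OF m iv(1) jv(1) this jv(2)]
  have H: "Bnd m v j w \<le> KK m * (?Yw - ?Yv) + cc m * \<bar>?Xw - ?Xv\<bar>"
    unfolding Bnd_def wv .
  have "\<bar>?Xw - ?Xv\<bar> \<le> \<bar>?Xw\<bar> + ?tn * ?Yv" using cc(2) by linarith
  then have "cc m * \<bar>?Xw - ?Xv\<bar> \<le> cc m * (\<bar>?Xw\<bar> + ?tn * ?Yv)" using C(8) by (intro mult_left_mono) auto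
  moreover have "KK m * ?Yv = ?Yv / ?c + cc m * (?tn * ?Yv)"
    unfolding KK_def using C(5) by (simp only: distrib_right) simp
  moreover have "KK m * (?Yw - ?Yv) = KK m * ?Yw - KK m * ?Yv" by (simp only: right_diff_distrib)
  moreover have "cc m * (\<bar>?Xw\<bar> + ?tn * ?Yv) = cc m * \<bar>?Xw\<bar> + cc m * (?tn * ?Yv)" by (simp only: distrib_left)
  moreover have "Bnd m u i w = KK m * ?Yw + cc m * \<bar>?Xw\<bar>" by (simp only: Bnd_def)
  ultimately show ?thesis using H cc(1) by linarith
qed


lemma Bnd_ge_norm:
  assumes m: "m = 4*k+5" "k \<ge> 1" and c: "in_cone m u i w"
  shows "norm (w - u) \<le> Bnd m u i w"
proof -
  note C = cst[OF m]
  have c2: "(w - u) \<bullet> bisector m i \<ge> norm (w - u) * cos (cone_angle m / 2)" using c unfolding in_cone_def by auto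
  note cc = cone_coords[OF m c2]
  let ?Y = "(w - u) \<bullet> bisector m i"
  have "KK m * ?Y = ?Y / cos (cone_angle m / 2) + cc m * (tan (cone_angle m / 2) * ?Y)"
    unfolding KK_def using C(5) by (simp add: field_simps)
  moreover have "cc m * (tan (cone_angle m / 2) * ?Y) \<ge> 0" using C(8,9) cc(3) by simp
  moreover have "cc m * \<bar>(w - u) \<bullet> ncw (real i * cone_angle m)\<bar> \<ge> 0" using C(8) by simp
  ultimately show ?thesis using cc(1) unfolding Bnd_def by linarith
qed

lemma main_ind:
  assumes m: "m = 4*k+5" "k \<ge> 1" and fin: "finite P" and gp: "general_position m P"
  shows "u \<in> P \<Longrightarrow> w \<in> P \<Longrightarrow> in_cone m u i w \<Longrightarrow>
     \<exists>ps. theta_path m P u w ps \<and> path_length ps \<le> Bnd m u i w"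
proof -
  define S where "S = (\<lambda>(u,i,w). Bnd m u i w) ` (P \<times> {..<m} \<times> P)"
  have finS: "finite S" unfolding S_def using fin by simp
  have "\<forall>u i w. card {s\<in>S. s < Bnd m u i w} = n \<longrightarrow> u \<in> P \<longrightarrow> w \<in> P \<longrightarrow> in_cone m u i w \<longrightarrow>
     (\<exists>ps. theta_path m P u w ps \<and> path_length ps \<le> Bnd m u i w)" for n
  proof (induction n rule: less_induct)
    case (less n)
    show ?case
    proof (intro allI impI)
      fix u i w
      assume cn: "card {s\<in>S. s < Bnd m u i w} = n" and uP: "u \<in> P" and wP: "w \<in> P"
        and cw: "in_cone m u i w"
      let ?f = "\<lambda>x. (x - u) \<bullet> bisector m i"
      define Cs where "Cs = {x\<in>P. in_cone m u i x}"
      have finC: "finite Cs" "Cs \<noteq> {}" unfolding Cs_def using fin wP cw by (simp, blast)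
      define v where "v = arg_min_on ?f Cs"
      have vC: "v \<in> Cs" and vmin: "\<not>(\<exists>x\<in>Cs. ?f x < ?f v)"
        using arg_min_if_finite[OF finC, of ?f] unfolding v_def by auto
      have vP: "v \<in> P" and cv: "in_cone m u i v" using vC unfolding Cs_def by auto
      have vle: "\<forall>x\<in>P. in_cone m u i x \<longrightarrow> ?f v \<le> ?f x" using vmin unfolding Cs_def by (auto simp: not_less)
      have im: "i < m" using cw unfolding in_cone_def by auto
      have edge: "theta_adj m P u v"
        unfolding theta_adj_def theta_edge_def using uP vP im cv vle by blast
      have vu: "v \<noteq> u" using cv unfolding in_cone_def by auto
      show "\<exists>ps. theta_path m P u w ps \<and> path_length ps \<le> Bnd m u i w"
      proof (cases "v = w")
        case True
        have tp: "theta_path m P u w [u, w]"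
          unfolding theta_path_def using uP wP edge True by simp
        have "path_length [u, w] = norm (w - u)" by (simp add: dist_norm norm_minus_commute)
        with Bnd_ge_norm[OF m cw] tp show ?thesis by auto
      next
        case False
        have "(w - v) \<bullet> bisector m i \<noteq> 0" using gp vP wP False im unfolding general_position_def by blast
        moreover have "(w - v) \<bullet> bisector m i = ?f w - ?f v" by (simp add: inner_diff_left)
        ultimately have lt: "?f v < ?f w" using vle wP cw by fastforce
        have "w - v \<noteq> 0" using False by simp
        from cone_exists[OF m this] obtain j where j: "j < m"
          "(w - v) \<bullet> bisector m j \<ge> norm (w - v) * cos (cone_angle m / 2)" by blast
        have cvw: "in_cone m v j w" unfolding in_cone_def using j False by simp
        have G: "norm (v - u) + Bnd m v j w \<le> Bnd m u i w" by (rule G[OF m cw cv lt cvw])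
        have "norm (v - u) > 0" using vu by simp
        with G have Blt: "Bnd m v j w < Bnd m u i w" by linarith
        have "{s\<in>S. s < Bnd m v j w} \<subset> {s\<in>S. s < Bnd m u i w}"
        proof
          show "{s\<in>S. s < Bnd m v j w} \<subseteq> {s\<in>S. s < Bnd m u i w}" using Blt by auto
          have "Bnd m v j w \<in> S" unfolding S_def using vP wP j(1) by force
          then show "{s\<in>S. s < Bnd m v j w} \<noteq> {s\<in>S. s < Bnd m u i w}" using Blt by blast
        qed
        then have "card {s\<in>S. s < Bnd m v j w} < n" unfolding cn[symmetric]
          by (rule psubset_card_mono[rotated]) (use finS in auto)
        with less.IH obtain ps where ps: "theta_path m P v w ps" "path_length ps \<le> Bnd m v j w"
          using vP wP cvw by blast
        obtain rest where pr: "ps = v # rest" using ps(1) unfolding theta_path_def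
          by (cases ps) auto
        have "theta_path m P u w (u # ps)"
          using ps(1) uP edge unfolding theta_path_def pr by auto
        moreover have "path_length (u # ps) = norm (v - u) + path_length ps"
          unfolding pr by (simp add: dist_norm norm_minus_commute)
        ultimately show ?thesis using ps(2) G by (intro exI[of _ "u # ps"]) auto
      qed
    qed
  qed
  then show "u \<in> P \<Longrightarrow> w \<in> P \<Longrightarrow> in_cone m u i w \<Longrightarrow>
     \<exists>ps. theta_path m P u w ps \<and> path_length ps \<le> Bnd m u i w" by blast
qed


theorem mainTheorem12:
  fixes k m :: nat and P :: "point set" and u w :: point and i :: nat
  assumes "k \<ge> 1" and "m = 4 * k + 5"
    and "finite P" and "general_position m P"
    and "u \<in> P" and "w \<in> P" and "u \<noteq> w"
    and "in_cone m u i w"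
  shows "let \<theta> = cone_angle m;
             \<alpha> = uangle (w - u) (canon_mid m u i w - u)
         in \<exists>ps. theta_path m P u w ps \<and>
              path_length ps \<le> (cos \<alpha> / cos (\<theta> / 2)
                 + (cos \<alpha> * tan (\<theta> / 2) + sin \<alpha>) * cos (\<theta> / 4)
                   / (cos (\<theta> / 2) - sin (3 * \<theta> / 4))) * dist u w"
proof -
  have m: "m = 4*k+5" "k \<ge> 1" using assms by auto
  note C = cst[OF m]
  let ?t = "cone_angle m"
  let ?c = "cos (?t/2)"
  define A where "A = real i * ?t"
  define Y where "Y = (w - u) \<bullet> bisector m i"
  define X where "X = (w - u) \<bullet> ncw A"
  define N where "N = norm (w - u)"
  have Np: "N > 0" using assms(7) by (simp add: N_def)
  have c2: "Y \<ge> N * ?c" using assms(8) unfolding in_cone_def Y_def N_def by auto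
  have Yp: "Y > 0" using c2 Np C(5) by (meson mult_pos_pos order_less_le_trans)
  have fr: "Y\<^sup>2 + X\<^sup>2 = N\<^sup>2" using frame[of "w - u" A] unfolding Y_def X_def N_def bisector_def A_def .
  have M: "canon_mid m u i w - u = Y *\<^sub>R bisector m i"
  proof -
    have s: "sin (A - ?t/2) + sin (A + ?t/2) = 2 * ?c * sin A"
         "cos (A - ?t/2) + cos (A + ?t/2) = 2 * ?c * cos A"
      by (simp_all add: sin_add sin_diff cos_add cos_diff)
    have mid: "midpoint (u + a) (u + b) - u = (1/2::real) *\<^sub>R (a + b)" for a b :: point
      by (cases u, cases a, cases b) (simp add: midpoint_def field_simps)
    have "canon_mid m u i w - u = (1/2::real) *\<^sub>R ((Y / ?c) *\<^sub>R bdry_left m i + (Y / ?c) *\<^sub>R bdry_right m i)"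
      unfolding canon_mid_def canon_corner_left_def canon_corner_right_def Y_def[symmetric] mid ..
    also have "\<dots> = (Y / ?c / 2) *\<^sub>R (bdry_left m i + bdry_right m i)"
      by (simp add: scaleR_add_right mult.commute)
    also have "bdry_left m i + bdry_right m i = (2 * ?c) *\<^sub>R bisector m i"
      unfolding bdry_left_def bdry_right_def bisector_def cw_dir_def A_def[symmetric]
      using s by (simp add: algebra_simps)
    finally show ?thesis using C(5) by simp
  qed
  have nb: "norm (bisector m i) = 1" unfolding bisector_def cw_dir_def norm_pt by simp
  have ua: "uangle (w - u) (canon_mid m u i w - u) = arccos (Y / N)"
  proof -
    have "(w - u) \<bullet> (canon_mid m u i w - u) = Y * Y" unfolding M Y_def by simp
    moreover have "norm (canon_mid m u i w - u) = Y" unfolding M using nb Yp by simp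
    ultimately show ?thesis unfolding uangle_def N_def[symmetric] using Yp by simp
  qed
  have YN: "Y \<le> N"
  proof -
    have "Y\<^sup>2 \<le> N\<^sup>2" using fr zero_le_power2[of X] by linarith
    then show ?thesis by (rule power2_le_imp_le) (use Np in simp)
  qed
  have q0: "0 \<le> Y / N" using Yp Np by simp
  have q1: "Y / N \<le> 1" using YN Np by simp
  have ca: "cos (arccos (Y / N)) = Y / N" using q0 q1 by (intro cos_arccos) auto
  have sa: "sin (arccos (Y / N)) = \<bar>X\<bar> / N"
  proof -
    have "sin (arccos (Y / N)) = sqrt (1 - (Y/N)\<^sup>2)" using q0 q1 by (intro sin_arccos) auto
    also have "1 - (Y/N)\<^sup>2 = (X / N)\<^sup>2" using fr Np by (simp add: power_divide field_simps)
    also have "sqrt ((X / N)\<^sup>2) = \<bar>X\<bar> / N" using Np by simp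
    finally show ?thesis .
  qed
  obtain ps where ps: "theta_path m P u w ps" "path_length ps \<le> Bnd m u i w"
    using main_ind[OF m assms(3,4,5,6,8)] by blast
  have B: "Bnd m u i w = (Y / N / ?c + (Y / N * tan (?t/2) + \<bar>X\<bar> / N) * cos (?t/4)
                   / (?c - sin (3 * ?t / 4))) * N"
  proof -
    have alg: "(a/n/c + (a/n*t + b/n)*g/D)*n = (1/c + g/D*t)*a + g/D*b"
      if "n \<noteq> 0" "c \<noteq> 0" "D \<noteq> 0" for a b n c t g D :: real
      using that by (simp add: field_simps)
    have "Bnd m u i w = (1 / ?c + cc m * tan (?t/2)) * Y + cc m * \<bar>X\<bar>"
      unfolding Bnd_def KK_def Y_def X_def A_def ..
    also have "\<dots> = (Y / N / ?c + (Y / N * tan (?t/2) + \<bar>X\<bar> / N) * cos (?t/4)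
                   / (?c - sin (3 * ?t / 4))) * N"
      unfolding cc_def by (rule alg[symmetric]) (use Np C(5,7) in auto)
    finally show ?thesis .
  qed
  have "dist u w = N" unfolding N_def by (simp add: dist_norm norm_minus_commute)
  then show ?thesis unfolding Let_def ua ca sa using ps B by auto
qed

end
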